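(* Let $W\in\mathcal{P}(\mathcal{Y}|\mathcal{X})$ be a symmetric channel with $R_{\mathrm{cr}}<C(W)$ and no all-zero column, let $R_\infty<R<C(W)$, and let $q_R$, $\mathrm{e}_{\mathrm{SP}}(\cdot,R)$ be as in the context. (i) For every $\lambda\in\mathbb{R}$, $M_x(\lambda)=\sum_{y\in\mathrm{supp}(W(\cdot|x))}W(y|x)^{1-\lambda}q_R(y)^\lambda$ is finite and does not depend on $x\in\mathcal{X}$. (ii) Fix $x_{\mathrm o}\in\mathcal{X}$ and let $\mathbf{x}_{\mathrm o}^N$ be the $N$-tuple with all entries $x_{\mathrm o}$. For every $(N,R)$ code with ideal feedback (encoding maps $f_n$), every message $m$ and every $r\ge0$ for which $\mathrm{e}_{\mathrm{SP}}(r,R)$ is defined, $$P_{\mathbf{Y}^N|M}\{\mathcal{S}(m,r)\mid m\}=W\{\mathcal{S}(\mathbf{x}_{\mathrm o}^N,r)\mid\mathbf{x}_{\mathrm o}^N\},$$ where $\mathcal{S}(\mathbf{x}^N,r)=\{\mathbf{y}^N:\frac1N\sum_n\ln\frac{W(y_n|x_n)}{q_R(y_n)}\le r-\mathrm{e}_{\mathrm{SP}}(r,R)\}$ and $\mathcal{S}(m,r)=\{\mathbf{y}^N:\frac1N\sum_n\ln\frac{W(y_n|f_n(m,\mathbf{y}^{n-1}))}{q_R(y_n)}\le r-\mathrm{e}_{\mathrm{SP}}(r,R)\}$.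
   Context: $\mathcal{X},\mathcal{Y}$ finite; symmetric (Gallager): outputs partitionable into subsets within each of which every row of the transition submatrix is a permutation of every other row and every column of every other column. $U_{\mathcal{X}}$ uniform. $\mathrm{E}_{\mathrm{SP}}(r,U_{\mathcal{X}})=\min_{V:I(U_{\mathcal{X}};V)\le r}D(V\|W|U_{\mathcal{X}})$, $D(V\|W|Q)=\sum_xQ(x)D(V(\cdot|x)\|W(\cdot|x))$ and for $q\in\mathcal{P}(\mathcal{Y})$, $D(V\|q|Q)=\sum_xQ(x)D(V(\cdot|x)\|q)$. $R_\infty$, $R_{\mathrm{cr}}$, $C(W)$: infinite-sphere-packing rate, critical rate, capacity. $\rho_R=-\partial_r\mathrm{E}_{\mathrm{SP}}(r,U_{\mathcal{X}})|_{r=R}$ and $q_R(y)\propto(\sum_xU_{\mathcal{X}}(x)W(y|x)^{1/(1+\rho_R)})^{1+\rho_R}$ (normalized). For $r\le R$ (with the infimum below over a nonempty set), $\mathrm{e}_{\mathrm{SP}}(r,R)=\inf_{V:D(V\|q_R|U_{\mathcal{X}})\le r}D(V\|W|U_{\mathcal{X}})$. A code with ideal feedback has $f_n:\mathcal{M}\times\mathcal{Y}^{n-1}\to\mathcal{X}$ and output law $P_{\mathbf{Y}^N|M}(\mathbf{y}^N|m)=\prod_nW(y_n|f_n(m,\mathbf{y}^{n-1}))$. *)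

theory Defs
  imports "HOL-Analysis.Analysis"
begin

text \<open>Channels are stochastic matrices W x y = W(y|x) over finite alphabets.\<close>

definition stochastic :: "('a \<Rightarrow> 'b::finite \<Rightarrow> real) \<Rightarrow> bool" where
  "stochastic V \<longleftrightarrow> (\<forall>x y. 0 \<le> V x y) \<and> (\<forall>x. (\<Sum>y\<in>UNIV. V x y) = 1)"

definition pdist :: "('a::finite \<Rightarrow> real) \<Rightarrow> bool" where
  "pdist Q \<longleftrightarrow> (\<forall>x. 0 \<le> Q x) \<and> (\<Sum>x\<in>UNIV. Q x) = 1"

definition unif :: "'a::finite \<Rightarrow> real" where
  "unif x = 1 / real (card (UNIV :: 'a set))"

definition gallager_symmetric :: "('a::finite \<Rightarrow> 'b::finite \<Rightarrow> real) \<Rightarrow> bool" where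
  "gallager_symmetric W \<longleftrightarrow>
     (\<exists>P :: 'b set set.
        (\<forall>B\<in>P. B \<noteq> {}) \<and> (\<forall>B\<in>P. \<forall>B'\<in>P. B \<noteq> B' \<longrightarrow> B \<inter> B' = {}) \<and> \<Union>P = UNIV \<and>
        (\<forall>B\<in>P.
           (\<forall>x x'. \<exists>\<sigma>. bij_betw \<sigma> B B \<and> (\<forall>y\<in>B. W x' y = W x (\<sigma> y))) \<and>
           (\<forall>y\<in>B. \<forall>y'\<in>B. \<exists>\<pi>. bij \<pi> \<and> (\<forall>x. W x y' = W (\<pi> x) y))))"

definition outd :: "('a::finite \<Rightarrow> real) \<Rightarrow> ('a \<Rightarrow> 'b \<Rightarrow> real) \<Rightarrow> 'b \<Rightarrow> real" where
  "outd Q V y = (\<Sum>x\<in>UNIV. Q x * V x y)"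

definition MI :: "('a::finite \<Rightarrow> real) \<Rightarrow> ('a \<Rightarrow> 'b::finite \<Rightarrow> real) \<Rightarrow> real" where
  "MI Q V = (\<Sum>x\<in>UNIV. \<Sum>y\<in>UNIV.
      if Q x * V x y > 0 then Q x * V x y * ln (V x y / outd Q V y) else 0)"

definition kl :: "('b::finite \<Rightarrow> real) \<Rightarrow> ('b \<Rightarrow> real) \<Rightarrow> ereal" where
  "kl p q = (if \<forall>y. p y > 0 \<longrightarrow> q y > 0
             then ereal (\<Sum>y\<in>UNIV. if p y > 0 then p y * ln (p y / q y) else 0)
             else \<infinity>)"

definition condD :: "('a::finite \<Rightarrow> real) \<Rightarrow> ('a \<Rightarrow> 'b::finite \<Rightarrow> real) \<Rightarrow> ('a \<Rightarrow> 'b \<Rightarrow> real) \<Rightarrow> ereal" where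
  "condD Q V W = (\<Sum>x\<in>UNIV. ereal (Q x) * kl (V x) (W x))"

definition condDq :: "('a::finite \<Rightarrow> real) \<Rightarrow> ('a \<Rightarrow> 'b::finite \<Rightarrow> real) \<Rightarrow> ('b \<Rightarrow> real) \<Rightarrow> ereal" where
  "condDq Q V q = (\<Sum>x\<in>UNIV. ereal (Q x) * kl (V x) q)"

definition Esp :: "('a::finite \<Rightarrow> 'b::finite \<Rightarrow> real) \<Rightarrow> real \<Rightarrow> ereal" where
  "Esp W r = (INF V\<in>{V. stochastic V \<and> MI unif V \<le> r}. condD unif V W)"

definition Rinf :: "('a::finite \<Rightarrow> 'b::finite \<Rightarrow> real) \<Rightarrow> real" where
  "Rinf W = Inf {r. Esp W r < \<infinity>}"

definition E0 :: "('a::finite \<Rightarrow> 'b::finite \<Rightarrow> real) \<Rightarrow> real \<Rightarrow> ('a \<Rightarrow> real) \<Rightarrow> real" where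
  "E0 W \<rho> Q = - ln (\<Sum>y\<in>UNIV. (\<Sum>x\<in>UNIV. Q x * W x y powr (1 / (1 + \<rho>))) powr (1 + \<rho>))"

text \<open>Critical rate: derivative of E_0(rho, Q) at rho = 1 for the optimal input
  (the uniform one for symmetric channels).\<close>
definition Rcr :: "('a::finite \<Rightarrow> 'b::finite \<Rightarrow> real) \<Rightarrow> real" where
  "Rcr W = deriv (\<lambda>\<rho>. E0 W \<rho> unif) 1"

definition capacity :: "('a::finite \<Rightarrow> 'b::finite \<Rightarrow> real) \<Rightarrow> real" where
  "capacity W = Sup {MI Q W | Q. pdist Q}"

definition rhoR :: "('a::finite \<Rightarrow> 'b::finite \<Rightarrow> real) \<Rightarrow> real \<Rightarrow> real" where
  "rhoR W R = - deriv (\<lambda>r. real_of_ereal (Esp W r)) R"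

definition qR :: "('a::finite \<Rightarrow> 'b::finite \<Rightarrow> real) \<Rightarrow> real \<Rightarrow> 'b \<Rightarrow> real" where
  "qR W R y =
     (let \<rho> = rhoR W R;
          g = (\<lambda>y. (\<Sum>x\<in>UNIV. unif x * W x y powr (1 / (1 + \<rho>))) powr (1 + \<rho>))
      in g y / (\<Sum>y'\<in>UNIV. g y'))"

definition esp_set :: "('a::finite \<Rightarrow> 'b::finite \<Rightarrow> real) \<Rightarrow> real \<Rightarrow> real \<Rightarrow> ('a \<Rightarrow> 'b \<Rightarrow> real) set" where
  "esp_set W R r = {V. stochastic V \<and> condDq unif V (qR W R) \<le> ereal r}"

definition eSP :: "('a::finite \<Rightarrow> 'b::finite \<Rightarrow> real) \<Rightarrow> real \<Rightarrow> real \<Rightarrow> ereal" where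
  "eSP W R r = (INF V\<in>esp_set W R r. condD unif V W)"

definition epow :: "real \<Rightarrow> real \<Rightarrow> ereal" where
  "epow a b = (if a = 0 then (if b = 0 then 1 else if b > 0 then 0 else \<infinity>) else ereal (a powr b))"

definition Mgf :: "('a::finite \<Rightarrow> 'b::finite \<Rightarrow> real) \<Rightarrow> real \<Rightarrow> 'a \<Rightarrow> real \<Rightarrow> ereal" where
  "Mgf W R x lam = (\<Sum>y\<in>{y. W x y > 0}. ereal (W x y powr (1 - lam)) * epow (qR W R y) lam)"

definition llr :: "('a \<Rightarrow> 'b \<Rightarrow> real) \<Rightarrow> ('b \<Rightarrow> real) \<Rightarrow> 'a \<Rightarrow> 'b \<Rightarrow> ereal" where
  "llr W q x y = (if W x y = 0 then -\<infinity> else if q y = 0 then \<infinity> else ereal (ln (W x y / q y)))"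

text \<open>S(m,r) for a feedback encoder f (index n = 0..N-1, f n m uses the first n outputs).\<close>
definition Sfb :: "('a::finite \<Rightarrow> 'b::finite \<Rightarrow> real) \<Rightarrow> real \<Rightarrow> nat
     \<Rightarrow> (nat \<Rightarrow> 'm \<Rightarrow> 'b list \<Rightarrow> 'a) \<Rightarrow> 'm \<Rightarrow> real \<Rightarrow> 'b list set" where
  "Sfb W R N f m r = {ys. length ys = N \<and>
     ereal (1 / real N) * (\<Sum>n<N. llr W (qR W R) (f n m (take n ys)) (ys ! n)) \<le> ereal r - eSP W R r}"

definition Sseq :: "('a::finite \<Rightarrow> 'b::finite \<Rightarrow> real) \<Rightarrow> real \<Rightarrow> nat \<Rightarrow> 'a list \<Rightarrow> real \<Rightarrow> 'b list set" where
  "Sseq W R N xs r = {ys. length ys = N \<and>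
     ereal (1 / real N) * (\<Sum>n<N. llr W (qR W R) (xs ! n) (ys ! n)) \<le> ereal r - eSP W R r}"

definition Pfb :: "('a \<Rightarrow> 'b \<Rightarrow> real) \<Rightarrow> nat \<Rightarrow> (nat \<Rightarrow> 'm \<Rightarrow> 'b list \<Rightarrow> 'a) \<Rightarrow> 'm \<Rightarrow> 'b list set \<Rightarrow> real" where
  "Pfb W N f m A = (\<Sum>ys\<in>A. \<Prod>n<N. W (f n m (take n ys)) (ys ! n))"

definition Pseq :: "('a \<Rightarrow> 'b \<Rightarrow> real) \<Rightarrow> nat \<Rightarrow> 'a list \<Rightarrow> 'b list set \<Rightarrow> real" where
  "Pseq W N xs A = (\<Sum>ys\<in>A. \<Prod>n<N. W (xs ! n) (ys ! n))"

end

theory Submission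
  imports Defs
begin
lemma sym_sum:
  fixes W :: "'x::finite \<Rightarrow> 'y::finite \<Rightarrow> real" and q :: "'y \<Rightarrow> real"
    and \<Phi> :: "real \<Rightarrow> real \<Rightarrow> 'c::comm_monoid_add"
  assumes "gallager_symmetric W"
    and hq: "\<And>y y' \<pi>. bij \<pi> \<Longrightarrow> (\<forall>x. W x y' = W (\<pi> x) y) \<Longrightarrow> q y' = q y"
  shows "(\<Sum>y\<in>UNIV. \<Phi> (W x y) (q y)) = (\<Sum>y\<in>UNIV. \<Phi> (W x' y) (q y))"
proof -
  have "\<exists>P :: 'y set set.
        (\<forall>B\<in>P. B \<noteq> {}) \<and> (\<forall>B\<in>P. \<forall>B'\<in>P. B \<noteq> B' \<longrightarrow> B \<inter> B' = {}) \<and> \<Union>P = UNIV \<and>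
        (\<forall>B\<in>P.
           (\<forall>x x'. \<exists>\<sigma>. bij_betw \<sigma> B B \<and> (\<forall>y\<in>B. W x' y = W x (\<sigma> y))) \<and>
           (\<forall>y\<in>B. \<forall>y'\<in>B. \<exists>\<pi>. bij \<pi> \<and> (\<forall>x. W x y' = W (\<pi> x) y)))"
    using assms(1) unfolding gallager_symmetric_def .
  then obtain P :: "'y set set" where H: "(\<forall>B\<in>P. B \<noteq> {}) \<and> (\<forall>B\<in>P. \<forall>B'\<in>P. B \<noteq> B' \<longrightarrow> B \<inter> B' = {}) \<and> \<Union>P = UNIV \<and>
        (\<forall>B\<in>P.
           (\<forall>x x'. \<exists>\<sigma>. bij_betw \<sigma> B B \<and> (\<forall>y\<in>B. W x' y = W x (\<sigma> y))) \<and>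
           (\<forall>y\<in>B. \<forall>y'\<in>B. \<exists>\<pi>. bij \<pi> \<and> (\<forall>x. W x y' = W (\<pi> x) y)))"
    by (rule exE)
  note dj = H[THEN conjunct2, THEN conjunct1]
  note cov = H[THEN conjunct2, THEN conjunct2, THEN conjunct1]
  note blk = H[THEN conjunct2, THEN conjunct2, THEN conjunct2]
  have finP: "finite P" by (rule finite_subset[of _ "Pow UNIV"]) auto
  have dec: "(\<Sum>y\<in>UNIV. h y) = (\<Sum>B\<in>P. \<Sum>y\<in>B. h y)" for h :: "'y \<Rightarrow> 'c"
    using sum.Union_disjoint[of P h] finP dj cov by auto
  have blkeq: "(\<Sum>y\<in>B. \<Phi> (W x' y) (q y)) = (\<Sum>y\<in>B. \<Phi> (W x y) (q y))" if B: "B \<in> P" for B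
  proof -
    have bB: "\<forall>x x'. \<exists>\<sigma>. bij_betw \<sigma> B B \<and> (\<forall>y\<in>B. W x' y = W x (\<sigma> y))"
      using bspec[OF blk B] by (rule conjunct1)
    have bB2: "\<forall>y\<in>B. \<forall>y'\<in>B. \<exists>\<pi>. bij \<pi> \<and> (\<forall>x. W x y' = W (\<pi> x) y)"
      using bspec[OF blk B] by (rule conjunct2)
    obtain \<sigma> where s: "bij_betw \<sigma> B B" and sw: "\<forall>y\<in>B. W x' y = W x (\<sigma> y)"
      using bB[rule_format, of x' x] by (elim exE conjE)
    have qs: "q (\<sigma> y) = q y" if yB: "y \<in> B" for y
    proof -
      have sy: "\<sigma> y \<in> B" using bij_betwE[OF s] yB by blast
      obtain \<pi> where "bij \<pi>" "\<forall>x. W x (\<sigma> y) = W (\<pi> x) y"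
        using bB2[rule_format, OF yB sy] by (elim exE conjE)
      then show ?thesis by (rule hq)
    qed
    have "(\<Sum>y\<in>B. \<Phi> (W x' y) (q y)) = (\<Sum>y\<in>B. \<Phi> (W x (\<sigma> y)) (q (\<sigma> y)))"
      using sw qs by (intro sum.cong) auto
    also have "\<dots> = (\<Sum>y\<in>B. \<Phi> (W x y) (q y))"
      using sum.reindex_bij_betw[OF s, of "\<lambda>y. \<Phi> (W x y) (q y)"] by simp
    finally show ?thesis .
  qed
  show ?thesis unfolding dec[of "\<lambda>y. \<Phi> (W x y) (q y)"] dec[of "\<lambda>y. \<Phi> (W x' y) (q y)"]
    by (rule sum.cong[OF refl]) (simp add: blkeq)
qed

lemma qR_sym:
  fixes W :: "'x::finite \<Rightarrow> 'y::finite \<Rightarrow> real"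
  assumes "bij \<pi>" "\<forall>x. W x y' = W (\<pi> x) y"
  shows "qR W R y' = qR W R y"
proof -
  have "(\<Sum>x\<in>UNIV. unif x * W x y' powr a) = (\<Sum>x\<in>UNIV. unif x * W x y powr a)" for a
  proof -
    have "(\<Sum>x\<in>UNIV. unif x * W x y' powr a) = (\<Sum>x\<in>UNIV. unif (\<pi> x) * W (\<pi> x) y powr a)"
      using assms(2) by (simp add: unif_def)
    also have "\<dots> = (\<Sum>x\<in>UNIV. unif x * W x y powr a)"
      using sum.reindex_bij_betw[of \<pi> UNIV UNIV "\<lambda>x. unif x * W x y powr a"] assms(1)
      by (simp add: bij_def)
    finally show ?thesis .
  qed
  then show ?thesis unfolding qR_def Let_def by simp
qed

lemma qR_pos:
  fixes W :: "'x::finite \<Rightarrow> 'y::finite \<Rightarrow> real"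
  assumes "W x y \<noteq> 0"
  shows "qR W R y > 0"
proof -
  define g where "g = (\<lambda>y. (\<Sum>x\<in>UNIV. unif x * W x y powr (1 / (1 + rhoR W R))) powr (1 + rhoR W R))"
  have u: "unif x > 0" for x :: 'x by (simp add: unif_def)
  have gnn: "g y' \<ge> 0" for y' unfolding g_def by simp
  have "(\<Sum>x\<in>UNIV. unif x * W x y powr (1 / (1 + rhoR W R))) > 0"
  proof -
    have "unif x * W x y powr (1 / (1 + rhoR W R)) > 0" using u assms by simp
    moreover have "(\<Sum>x\<in>UNIV. unif x * W x y powr (1 / (1 + rhoR W R))) \<ge> unif x * W x y powr (1 / (1 + rhoR W R))"
      by (rule member_le_sum) (auto intro!: mult_nonneg_nonneg simp: unif_def)
    ultimately show ?thesis by linarith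
  qed
  then have gp: "g y > 0" unfolding g_def by simp
  moreover have "(\<Sum>y'\<in>UNIV. g y') \<ge> g y" by (rule member_le_sum) (use gnn in auto)
  moreover have "qR W R y = g y / (\<Sum>y'\<in>UNIV. g y')" unfolding qR_def Let_def g_def by simp
  ultimately show ?thesis by simp
qed

lemma fin_len: "finite {ys :: 'y::finite list. length ys = N}"
  using finite_lists_length_eq[of "UNIV :: 'y set" N] by simp

lemma sum_lists_Suc:
  "(\<Sum>ys\<in>{ys :: 'y::finite list. length ys = Suc N}. F ys) =
   (\<Sum>y\<in>UNIV. \<Sum>ys\<in>{ys. length ys = N}. F (y # ys))"
proof -
  have eq: "{ys :: 'y list. length ys = Suc N} = (\<lambda>p. fst p # snd p) ` (UNIV \<times> {ys. length ys = N})"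
    by (force simp: length_Suc_conv image_iff)
  have inj: "inj_on (\<lambda>p. fst p # snd p) (UNIV \<times> {ys :: 'y list. length ys = N})"
    by (auto simp: inj_on_def)
  show ?thesis unfolding eq sum.reindex[OF inj]
    by (simp add: sum.cartesian_product split_def)
qed

definition fbG :: "('x \<Rightarrow> 'y::finite \<Rightarrow> real) \<Rightarrow> ('y \<Rightarrow> real) \<Rightarrow> nat \<Rightarrow> (nat \<Rightarrow> 'y list \<Rightarrow> 'x)
   \<Rightarrow> (ereal \<Rightarrow> real) \<Rightarrow> real" where
  "fbG W q N f h = (\<Sum>ys\<in>{ys. length ys = N}.
      (\<Prod>n<N. W (f n (take n ys)) (ys ! n)) * h (\<Sum>n<N. llr W q (f n (take n ys)) (ys ! n)))"

lemma fbG_Suc: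
  "fbG W q (Suc N) f h = (\<Sum>y\<in>UNIV. W (f 0 []) y *
      fbG W q N (\<lambda>n zs. f (Suc n) (y # zs)) (\<lambda>s. h (llr W q (f 0 []) y + s)))"
  unfolding fbG_def sum_lists_Suc prod.lessThan_Suc_shift sum.lessThan_Suc_shift
  by (simp add: sum_distrib_left mult.assoc)

lemma fbG_cong:
  assumes "\<And>n zs. n < N \<Longrightarrow> f n zs = g n zs"
  shows "fbG W q N f h = fbG W q N g h"
proof -
  have 1: "(\<Prod>n<N. W (f n (take n ys)) (ys ! n)) = (\<Prod>n<N. W (g n (take n ys)) (ys ! n))" for ys
    by (rule prod.cong) (auto simp: assms)
  have 2: "(\<Sum>n<N. llr W q (f n (take n ys)) (ys ! n)) = (\<Sum>n<N. llr W q (g n (take n ys)) (ys ! n))" for ys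
    by (rule sum.cong) (auto simp: assms)
  show ?thesis unfolding fbG_def 1 2 ..
qed

lemma fbG_0: "fbG W q 0 f h = h 0"
  unfolding fbG_def by simp

lemma fbG_const:
  fixes W :: "'x::finite \<Rightarrow> 'y::finite \<Rightarrow> real"
  assumes "gallager_symmetric W"
    and hq: "\<And>y y' \<pi>. bij \<pi> \<Longrightarrow> (\<forall>x. W x y' = W (\<pi> x) y) \<Longrightarrow> q y' = q y"
  shows "fbG W q N f h = fbG W q N (\<lambda>_ _. xo) h"
proof (induction N arbitrary: f h)
  case 0
  then show ?case by (simp add: fbG_0)
next
  case (Suc N)
  define \<Lambda> where "\<Lambda> = (\<lambda>w qq. if w = 0 then -\<infinity> else if qq = 0 then \<infinity> else ereal (ln (w / qq)))"
  have ll: "llr W q x y = \<Lambda> (W x y) (q y)" for x y unfolding llr_def \<Lambda>_def by simp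
  define \<Phi> where "\<Phi> = (\<lambda>w qq. w * fbG W q N (\<lambda>_ _. xo) (\<lambda>s. h (\<Lambda> w qq + s)))"
  have "fbG W q (Suc N) f h = (\<Sum>y\<in>UNIV. W (f 0 []) y *
      fbG W q N (\<lambda>_ _. xo) (\<lambda>s. h (llr W q (f 0 []) y + s)))"
    unfolding fbG_Suc
  proof (rule sum.cong[OF refl])
    fix y
    show "W (f 0 []) y * fbG W q N (\<lambda>n zs. f (Suc n) (y # zs)) (\<lambda>s. h (llr W q (f 0 []) y + s)) =
          W (f 0 []) y * fbG W q N (\<lambda>_ _. xo) (\<lambda>s. h (llr W q (f 0 []) y + s))"
      using Suc.IH[of "\<lambda>n zs. f (Suc n) (y # zs)" "\<lambda>s. h (llr W q (f 0 []) y + s)"] by (simp only:)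
  qed
  also have "\<dots> = (\<Sum>y\<in>UNIV. \<Phi> (W (f 0 []) y) (q y))" unfolding \<Phi>_def ll ..
  also have "\<dots> = (\<Sum>y\<in>UNIV. \<Phi> (W xo y) (q y))"
    by (rule sym_sum[OF assms(1)]) (rule hq)
  also have "\<dots> = fbG W q (Suc N) (\<lambda>_ _. xo) h"
    unfolding fbG_Suc \<Phi>_def ll ..
  finally show ?case .
qed

lemma ind_sum:
  assumes "finite A"
  shows "(\<Sum>ys\<in>{ys\<in>A. C ys}. P ys) = (\<Sum>ys\<in>A. P ys * (if C ys then 1 else (0::real)))"
proof -
  have "(\<Sum>ys\<in>A. P ys * (if C ys then 1 else (0::real))) = (\<Sum>ys\<in>A. if C ys then P ys else 0)"
    by (intro sum.cong) auto
  also have "\<dots> = sum P {ys\<in>A. C ys}" by (rule sum.inter_filter[OF assms, symmetric])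
  finally show ?thesis by simp
qed

lemma Pfb_fbG:
  "Pfb W N f m (Sfb W R N f m r) = fbG W (qR W R) N (\<lambda>n zs. f n m zs)
     (\<lambda>s. if ereal (1 / real N) * s \<le> ereal r - eSP W R r then 1 else 0)"
proof -
  have "Sfb W R N f m r = {ys\<in>{ys. length ys = N}. ereal (1 / real N) *
      (\<Sum>n<N. llr W (qR W R) (f n m (take n ys)) (ys ! n)) \<le> ereal r - eSP W R r}"
    unfolding Sfb_def by (simp only: mem_Collect_eq)
  then show ?thesis unfolding Pfb_def fbG_def by (simp only: ind_sum[OF fin_len])
qed

lemma Pseq_fbG:
  "Pseq W N xs (Sseq W R N xs r) = fbG W (qR W R) N (\<lambda>n zs. xs ! n)
     (\<lambda>s. if ereal (1 / real N) * s \<le> ereal r - eSP W R r then 1 else 0)"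
proof -
  have "Sseq W R N xs r = {ys\<in>{ys. length ys = N}. ereal (1 / real N) *
      (\<Sum>n<N. llr W (qR W R) (xs ! n) (ys ! n)) \<le> ereal r - eSP W R r}"
    unfolding Sseq_def by (simp only: mem_Collect_eq)
  then show ?thesis unfolding Pseq_def fbG_def by (simp only: ind_sum[OF fin_len])
qed

theorem lemma3:
  fixes W :: "'x::finite \<Rightarrow> 'y::finite \<Rightarrow> real" and R :: real
  assumes "stochastic W"
    and "gallager_symmetric W"
    and "Rcr W < capacity W"
    and "\<forall>y. \<exists>x. W x y \<noteq> 0"
    and "Rinf W < R" and "R < capacity W"
  shows "(\<forall>lam::real. \<forall>x x'. Mgf W R x lam \<noteq> \<infinity> \<and> Mgf W R x lam = Mgf W R x' lam) \<and>
         (\<forall>(xo::'x) (N::nat) (f :: nat \<Rightarrow> 'm \<Rightarrow> 'y list \<Rightarrow> 'x) (M :: 'm set) (m::'m) (r::real).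
            1 \<le> N \<longrightarrow> finite M \<longrightarrow> exp (real N * R) \<le> real (card M) \<longrightarrow> m \<in> M \<longrightarrow>
            0 \<le> r \<longrightarrow> r \<le> R \<longrightarrow> esp_set W R r \<noteq> {} \<longrightarrow>
            Pfb W N f m (Sfb W R N f m r) =
            Pseq W N (replicate N xo) (Sseq W R N (replicate N xo) r))"
proof (intro conjI allI impI)
  have hq: "\<And>y y' \<pi>. bij \<pi> \<Longrightarrow> (\<forall>x. W x y' = W (\<pi> x) y) \<Longrightarrow> qR W R y' = qR W R y"
    by (rule qR_sym)
  fix lam :: real and x x' :: 'x
  define \<Phi> where "\<Phi> = (\<lambda>w qq. if w > 0 then ereal (w powr (1 - lam)) * epow qq lam else 0)"
  have M: "Mgf W R z lam = (\<Sum>y\<in>UNIV. \<Phi> (W z y) (qR W R y))" for z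
  proof -
    have "(\<Sum>y\<in>UNIV. \<Phi> (W z y) (qR W R y)) = (\<Sum>y\<in>{y\<in>UNIV. W z y > 0}. ereal (W z y powr (1 - lam)) * epow (qR W R y) lam)"
      unfolding \<Phi>_def by (rule sum.inter_filter[symmetric]) simp
    then show ?thesis unfolding Mgf_def by simp
  qed
  show "Mgf W R x lam = Mgf W R x' lam" unfolding M
    by (rule sym_sum[OF assms(2)]) (rule hq)
  have "Mgf W R x lam = (\<Sum>y\<in>{y. W x y > 0}. ereal (W x y powr (1 - lam) * qR W R y powr lam))"
    unfolding Mgf_def
  proof (rule sum.cong)
    fix y assume "y \<in> {y. W x y > 0}"
    then have "qR W R y > 0" using qR_pos[of W x y R] by simp
    then show "ereal (W x y powr (1 - lam)) * epow (qR W R y) lam = ereal (W x y powr (1 - lam) * qR W R y powr lam)"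
      by (simp add: epow_def)
  qed simp
  also have "\<dots> = ereal (\<Sum>y\<in>{y. W x y > 0}. W x y powr (1 - lam) * qR W R y powr lam)"
    by (rule sum_ereal)
  finally show "Mgf W R x lam \<noteq> \<infinity>" by simp
next
  have hq: "\<And>y y' \<pi>. bij \<pi> \<Longrightarrow> (\<forall>x. W x y' = W (\<pi> x) y) \<Longrightarrow> qR W R y' = qR W R y"
    by (rule qR_sym)
  fix xo :: 'x and N :: nat and f :: "nat \<Rightarrow> 'm \<Rightarrow> 'y list \<Rightarrow> 'x" and M :: "'m set" and m :: 'm and r :: real
  define h where "h = (\<lambda>s. if ereal (1 / real N) * s \<le> ereal r - eSP W R r then 1 else (0::real))"
  have "Pfb W N f m (Sfb W R N f m r) = fbG W (qR W R) N (\<lambda>n zs. f n m zs) h"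
    unfolding h_def by (rule Pfb_fbG)
  also have "\<dots> = fbG W (qR W R) N (\<lambda>_ _. xo) h"
    by (rule fbG_const[OF assms(2)]) (rule hq)
  also have "\<dots> = fbG W (qR W R) N (\<lambda>n zs. replicate N xo ! n) h"
    by (rule fbG_cong) simp
  also have "\<dots> = Pseq W N (replicate N xo) (Sseq W R N (replicate N xo) r)"
    unfolding h_def by (rule Pseq_fbG[symmetric])
  finally show "Pfb W N f m (Sfb W R N f m r) = Pseq W N (replicate N xo) (Sseq W R N (replicate N xo) r)" .
qed

end
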